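(* Let $\lambda>0$, $d_v>0$, $m=\lambda\pi d_v^2$, and suppose $\epsilon\ge d_v$. Then the range-vector localizability probability equals the localizability probability based on the number of visible landmarks: $$\mathbb P\big[\Delta_p(\mathbf R_{\mathbf 0},\mathbf R_{\mathbf x})>\epsilon\big]=\mathbb P[N_{\mathbf 0}\neq N_{\mathbf x}]=1-e^{-2m}I_0(2m).$$
   Context: Following the paper's model, the landmarks seen from the origin $\mathbf 0$ and those seen from a second location $\mathbf x\in\mathbb R^2$ are given by two independent homogeneous Poisson point processes $\Phi_{\mathbf 0}$ and $\Phi_{\mathbf x}$ on $\mathbb R^2$ of intensity $\lambda$. A landmark is visible from a location if its Euclidean distance to that location is at most $d_v$. $N_{\mathbf 0}$ (resp. $N_{\mathbf x}$) is the number of visible landmarks of $\Phi_{\mathbf 0}$ from $\mathbf 0$ (resp. of $\Phi_{\mathbf x}$ from $\mathbf x$). The range vector $\mathbf R_{\mathbf 0}\in\mathbb R^{N_{\mathbf 0}}$ lists the distances from $\mathbf 0$ to its visible landmarks ordered clockwise by bearing from a fixed reference direction; $\mathbf R_{\mathbf x}\in\mathbb R^{N_{\mathbf x}}$ is defined likewise relative to $\mathbf x$. For real vectors, $\Delta_p(\mathbf u,\mathbf v)=\|\mathbf u-\mathbf v\|_\infty$ if $\dim\mathbf u=\dim\mathbf v$ (equal to $0$ when both are empty) and $\infty$ otherwise. $I_0$ is the modified Bessel function of the first kind of order zero. *)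

theory Defs
  imports "HOL-Probability.Probability"
begin

text \<open>The plane R^2 is modelled by the type complex (a Euclidean space of dimension 2,
  with Lebesgue measure lborel).  A point configuration is a set of points.\<close>

definition bessel_I0 :: "real \<Rightarrow> real" where
  "bessel_I0 x = (\<Sum>k. (x / 2) ^ (2 * k) / (fact k) ^ 2)"

definition count_in :: "complex set \<Rightarrow> complex set \<Rightarrow> nat" where
  "count_in S B = card (S \<inter> B)"

definition homogeneous_PPP :: "'w measure \<Rightarrow> real \<Rightarrow> ('w \<Rightarrow> complex set) \<Rightarrow> bool" where
  "homogeneous_PPP M lam Phi \<longleftrightarrow>
     (\<forall>w\<in>space M. \<forall>B. bounded B \<longrightarrow> finite (Phi w \<inter> B)) \<and>
     (\<forall>B k. B \<in> sets lborel \<and> bounded B \<longrightarrow>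
        {w\<in>space M. count_in (Phi w) B = k} \<in> sets M \<and>
        measure M {w\<in>space M. count_in (Phi w) B = k}
          = exp (- lam * measure lborel B) * (lam * measure lborel B) ^ k / fact k) \<and>
     (\<forall>n (B :: nat \<Rightarrow> complex set) (k :: nat \<Rightarrow> nat).
        (\<forall>i<n. B i \<in> sets lborel \<and> bounded (B i)) \<and>
        (\<forall>i<n. \<forall>j<n. i \<noteq> j \<longrightarrow> B i \<inter> B j = {}) \<longrightarrow>
        measure M {w\<in>space M. \<forall>i<n. count_in (Phi w) (B i) = k i}
          = (\<Prod>i<n. measure M {w\<in>space M. count_in (Phi w) (B i) = k i}))"

text \<open>Events determined by the counts of Phi in finitely many bounded Borel sets
  (an intersection-stable generator of the sigma-algebra generated by Phi).\<close>
definition PPP_events :: "'w measure \<Rightarrow> ('w \<Rightarrow> complex set) \<Rightarrow> 'w set set" where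
  "PPP_events M Phi =
     {{w\<in>space M. \<forall>i<n. count_in (Phi w) (B i) = k i} | n (B :: nat \<Rightarrow> complex set) (k :: nat \<Rightarrow> nat).
        \<forall>i<n. B i \<in> sets lborel \<and> bounded (B i)}"

definition independent_PPs :: "'w measure \<Rightarrow> ('w \<Rightarrow> complex set) \<Rightarrow> ('w \<Rightarrow> complex set) \<Rightarrow> bool" where
  "independent_PPs M Phi Psi \<longleftrightarrow> prob_space.indep_set M (PPP_events M Phi) (PPP_events M Psi)"

definition visible :: "real \<Rightarrow> complex \<Rightarrow> complex set \<Rightarrow> complex set" where
  "visible dv p S = {y \<in> S. dist y p \<le> dv}"

definition num_visible :: "real \<Rightarrow> complex \<Rightarrow> complex set \<Rightarrow> nat" where
  "num_visible dv p S = card (visible dv p S)"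

text \<open>Clockwise bearing in [0, 2 pi) of the vector z, measured from the fixed reference
  direction with angle theta.\<close>
definition bearing :: "real \<Rightarrow> complex \<Rightarrow> real" where
  "bearing theta z = 2 * pi * frac ((theta - Arg z) / (2 * pi))"

text \<open>Range vector: distances from p to its visible landmarks, listed in clockwise order of
  bearing (ties, a null event, broken arbitrarily).\<close>
definition range_vector :: "real \<Rightarrow> real \<Rightarrow> complex \<Rightarrow> complex set \<Rightarrow> real list" where
  "range_vector theta dv p S =
     map (\<lambda>y. dist y p)
       (SOME ys. set ys = visible dv p S \<and> distinct ys \<and> sorted (map (\<lambda>y. bearing theta (y - p)) ys))"

definition Delta_p :: "real list \<Rightarrow> real list \<Rightarrow> ereal" where
  "Delta_p u v = (if length u = length v
                  then ereal (Max (insert 0 {\<bar>u ! i - v ! i\<bar> | i. i < length u}))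
                  else \<infinity>)"

end

theory Submission
  imports Defs
begin

lemma visible_eq: "visible dv p S = S \<inter> cball p dv"
  by (auto simp: visible_def dist_commute)

lemma range_vector_props:
  assumes "finite (visible dv p S)"
  shows "length (range_vector theta dv p S) = card (visible dv p S)
       \<and> (\<forall>r\<in>set (range_vector theta dv p S). 0 \<le> r \<and> r \<le> dv)"
proof -
  let ?P = "\<lambda>ys. set ys = visible dv p S \<and> distinct ys \<and> sorted (map (\<lambda>y. bearing theta (y - p)) ys)"
  obtain xs where xs: "set xs = visible dv p S" "distinct xs"
    using finite_distinct_list[OF assms] by blast
  have "?P (sort_key (\<lambda>y. bearing theta (y - p)) xs)"
    using xs by simp
  hence ex: "\<exists>ys. ?P ys" by blast
  have P: "?P (SOME ys. ?P ys)" by (rule someI_ex[OF ex])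
  show ?thesis unfolding range_vector_def
    using P distinct_card[of "SOME ys. ?P ys"]
    by (auto simp: visible_def)
qed

lemma Delta_le:
  assumes "length u = length v" "\<forall>r\<in>set u. 0 \<le> r \<and> r \<le> dv" "\<forall>r\<in>set v. 0 \<le> r \<and> r \<le> dv"
    "dv \<le> eps" "0 \<le> dv"
  shows "\<not> Delta_p u v > ereal eps"
proof -
  have fin: "finite {\<bar>u ! i - v ! i\<bar> | i. i < length u}" by simp
  have "\<forall>a\<in>{\<bar>u ! i - v ! i\<bar> | i. i < length u}. a \<le> dv"
  proof
    fix a assume "a \<in> {\<bar>u ! i - v ! i\<bar> | i. i < length u}"
    then obtain i where i: "i < length u" "a = \<bar>u ! i - v ! i\<bar>" by blast
    have "u ! i \<in> set u" "v ! i \<in> set v" using i assms(1) by auto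
    thus "a \<le> dv" using i assms(2,3) by fastforce
  qed
  hence "Max (insert 0 {\<bar>u ! i - v ! i\<bar> | i. i < length u}) \<le> dv"
    using fin assms(5) by (subst Max_le_iff) auto
  hence "Max (insert 0 {\<bar>u ! i - v ! i\<bar> | i. i < length u}) \<le> eps" using assms(4) by linarith
  thus ?thesis using assms(1) unfolding Delta_p_def by (simp add: not_less)
qed

theorem corollary1:
  fixes M :: "'w measure" and Phi0 Phix :: "'w \<Rightarrow> complex set"
    and lam dv eps theta m :: real and x :: complex
  assumes "prob_space M"
    and "lam > 0" and "dv > 0"
    and "m = lam * pi * dv ^ 2"
    and "eps \<ge> dv"
    and "homogeneous_PPP M lam Phi0"
    and "homogeneous_PPP M lam Phix"
    and "independent_PPs M Phi0 Phix"
  shows "measure M {w\<in>space M. Delta_p (range_vector theta dv 0 (Phi0 w))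
                                         (range_vector theta dv x (Phix w)) > ereal eps}
           = measure M {w\<in>space M. num_visible dv 0 (Phi0 w) \<noteq> num_visible dv x (Phix w)} \<and>
         measure M {w\<in>space M. num_visible dv 0 (Phi0 w) \<noteq> num_visible dv x (Phix w)}
           = 1 - exp (- 2 * m) * bessel_I0 (2 * m)"
proof
  interpret prob_space M by fact
  have P0: "homogeneous_PPP M lam Phi0" and Px: "homogeneous_PPP M lam Phix" by fact+
  have fin0: "finite (visible dv 0 (Phi0 w))" if "w \<in> space M" for w
    using P0 that unfolding homogeneous_PPP_def visible_eq by (meson bounded_cball)
  have finx: "finite (visible dv x (Phix w))" if "w \<in> space M" for w
    using Px that unfolding homogeneous_PPP_def visible_eq by (meson bounded_cball)
  show "measure M {w\<in>space M. Delta_p (range_vector theta dv 0 (Phi0 w))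
                                         (range_vector theta dv x (Phix w)) > ereal eps}
           = measure M {w\<in>space M. num_visible dv 0 (Phi0 w) \<noteq> num_visible dv x (Phix w)}"
  proof -
    have "{w\<in>space M. Delta_p (range_vector theta dv 0 (Phi0 w))
                                         (range_vector theta dv x (Phix w)) > ereal eps}
         = {w\<in>space M. num_visible dv 0 (Phi0 w) \<noteq> num_visible dv x (Phix w)}"
    proof (intro Collect_cong conj_cong refl)
      fix w assume w: "w \<in> space M"
      note A = range_vector_props[OF fin0[OF w], of theta]
      note B = range_vector_props[OF finx[OF w], of theta]
      show "(Delta_p (range_vector theta dv 0 (Phi0 w)) (range_vector theta dv x (Phix w)) > ereal eps)
          = (num_visible dv 0 (Phi0 w) \<noteq> num_visible dv x (Phix w))"
      proof (cases "num_visible dv 0 (Phi0 w) = num_visible dv x (Phix w)")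
        case True
        then show ?thesis using A B Delta_le[of "range_vector theta dv 0 (Phi0 w)"
              "range_vector theta dv x (Phix w)" dv eps] assms(3,5)
          by (simp add: num_visible_def)
      next
        case False
        then show ?thesis using A B by (simp add: num_visible_def Delta_p_def)
      qed
    qed
    thus ?thesis by simp
  qed
  define E0 where "E0 k = {w\<in>space M. count_in (Phi0 w) (cball 0 dv) = k}" for k
  define Ex where "Ex k = {w\<in>space M. count_in (Phix w) (cball x dv) = k}" for k
  have area0: "measure lborel (cball (0::complex) dv) = pi * dv^2"
    using content_cball[where c="0::complex" and r=dv] using assms(3) by (simp add: unit_ball_vol_2)
  have areax: "measure lborel (cball x dv) = pi * dv^2"
    using content_cball[where c=x and r=dv] using assms(3) by (simp add: unit_ball_vol_2)
  have E0: "E0 k \<in> sets M" "measure M (E0 k) = exp (- m) * m ^ k / fact k" for k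
    using P0 area0 assms(4) unfolding homogeneous_PPP_def E0_def
    by (auto simp: mult.assoc dest!: spec[of _ "cball 0 dv"])
  have Ex: "Ex k \<in> sets M" "measure M (Ex k) = exp (- m) * m ^ k / fact k" for k
    using Px areax assms(4) unfolding homogeneous_PPP_def Ex_def
    by (auto simp: mult.assoc dest!: spec[of _ "cball x dv"])
  have E0P: "E0 k \<in> PPP_events M Phi0" for k
    unfolding PPP_events_def E0_def
    by (rule CollectI, rule exI[of _ 1], rule exI[of _ "\<lambda>_. cball 0 dv"], rule exI[of _ "\<lambda>_. k"]) auto
  have ExP: "Ex k \<in> PPP_events M Phix" for k
    unfolding PPP_events_def Ex_def
    by (rule CollectI, rule exI[of _ 1], rule exI[of _ "\<lambda>_. cball x dv"], rule exI[of _ "\<lambda>_. k"]) auto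
  have ind: "prob (E0 k \<inter> Ex k) = (exp (- m) * m ^ k / fact k)^2" for k
    using indep_setD[OF assms(8)[unfolded independent_PPs_def] E0P ExP] E0 Ex
    by (simp add: power2_eq_square)
  define F where "F k = E0 k \<inter> Ex k" for k
  have Fs: "range F \<subseteq> sets M" using E0 Ex by (auto simp: F_def)
  have Fd: "disjoint_family F" unfolding disjoint_family_on_def F_def E0_def by auto
  have sums: "(\<lambda>k. (exp (- m) * m ^ k / fact k)^2) sums prob (\<Union>k. F k)"
    using finite_measure_UNION[OF Fs Fd] ind by (simp add: F_def)
  have eqset: "{w\<in>space M. num_visible dv 0 (Phi0 w) \<noteq> num_visible dv x (Phix w)}
      = space M - (\<Union>k. F k)"
    by (auto simp: F_def E0_def Ex_def num_visible_def count_in_def visible_eq)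
  have "(\<lambda>k. (exp (- m) * m ^ k / fact k)^2) = (\<lambda>k. exp (-2*m) * ((2*m/2)^(2*k) / (fact k)^2))"
    by (rule ext) (simp add: power_mult_distrib power_divide power_mult exp_add[symmetric] power2_eq_square mult_ac)
  with sums have "(\<lambda>k. exp (-2*m) * ((2*m/2)^(2*k) / (fact k)^2)) sums prob (\<Union>k. F k)" by simp
  hence "(\<lambda>k. (2*m/2)^(2*k) / (fact k)^2) sums (prob (\<Union>k. F k) / exp (-2*m))"
    using sums_divide[of _ _ "exp (-2*m)"] by force
  hence "bessel_I0 (2*m) = prob (\<Union>k. F k) / exp (-2*m)"
    unfolding bessel_I0_def by (rule sums_unique[symmetric])
  hence pF: "prob (\<Union>k. F k) = exp (-2*m) * bessel_I0 (2*m)" by simp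
  have "(\<Union>k. F k) \<in> sets M" using Fs by auto
  then show "measure M {w\<in>space M. num_visible dv 0 (Phi0 w) \<noteq> num_visible dv x (Phix w)}
           = 1 - exp (- 2 * m) * bessel_I0 (2 * m)"
    unfolding eqset using prob_compl pF by simp
qed

end
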